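(* Let $\mathcal{S}$ be a stratified staged tree for variables $X_1,\dots,X_n$ with $|\mathbb{X}_i|=r_i$, in which every stage consists of situations at a single level, and let $\alpha>0$. Then for every stage $u$ and every $k$, the CS-BDeu hyperparameter of the $k$-th edge of $u$ equals the BDepu hyperparameter of the $k$-th edge of $u$; explicitly, for a stage $u$ with $h$ situations at level $i-1$ (i.e. representing $X_i$), both equal $\alpha h/\prod_{t=1}^{i}r_t$, and both stage totals equal $\alpha h/\prod_{t=1}^{i-1}r_t$. Consequently $\mathrm{CS\text{-}BDeu}(\mathcal{S},\mathcal{D};\alpha)=\mathrm{BDepu}(\mathcal{S},\mathcal{D};\alpha)$ for every complete data sample $\mathcal{D}$.
   Context: An event tree is a finite directed rooted tree with edges directed away from the root; leaves have no outgoing edges, other nodes are situations; the level of a node is its distance (number of edges) from the root. A staged tree is an event tree with a partition of its situations into stages, situations in a common stage having the same number of outgoing edges, labelled consistently, with the $k$-th edges sharing a transition probability. For variables $X_1,\dots,X_n$ with finite state spaces $\mathbb{X}_i$, an event tree is $\mathcal{X}$-compatible if its nodes are the root $v_0$ together with one node $v(x_1,\dots,x_k)$ for each $(x_1,\dots,x_k)\in\mathbb{X}_1\times\dots\times\mathbb{X}_k$, $1\le k\le n$, with edges $v(x_1,\dots,x_{k-1})\to v(x_1,\dots,x_k)$ (and $v_0\to v(x_1)$); a staged tree is stratified if its event tree is $\mathcal{X}$-compatible for some such $\mathcal{X}$. Data: a complete sample $\mathcal{D}$ gives counts $n_{jk}$ of units passing through the $k$-th edge of some situation in stage $u_j$,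 $\overline n_j=\sum_k n_{jk}$. For hyperparameters $\alpha_{jk}$ with $\overline\alpha_j=\sum_k\alpha_{jk}$ the BD-metric is $\prod_j\big[\Gamma(\overline\alpha_j)/\Gamma(\overline\alpha_j+\overline n_j)\prod_k\Gamma(\alpha_{jk}+n_{jk})/\Gamma(\alpha_{jk})\big]$. BDepu: $\alpha_{jk}=\frac{\alpha}{|\Lambda(\mathcal{S})|}\sum_{m=1}^{h_j}|\Lambda(e^m_{jk})|$, where $\Lambda(\mathcal{S})$ is the set of root-to-leaf paths, $\Lambda(e)$ the set of those containing edge $e$, $h_j$ the number of situations in $u_j$, $e^m_{jk}$ the $k$-th edge of its $m$-th situation. CS-BDeu: hyperparameters are propagated forward from the root. The root stage has $\dot\alpha=\alpha$. For a stage $u_{ij}$ at level $i-1$ with $h_{ij}$ situations and $r_{ij}$ outgoing edges per situation, $\dot\alpha_{ij}$ is the sum of the (individual) hyperparameters of the $h_{ij}$ edges entering its situations, the stage edge hyperparameters are $\alpha_{ijk}=\dot\alpha_{ij}/r_{ij}$, and each individual edge emanating from a situation of $u_{ij}$ along label $k$ receives hyperparameter $\alpha_{ijk}/h_{ij}$. The CS-BDeu score is the BD-metric with these stage hyperparameters $\alpha_{ijk}$ (and $\overline\alpha_{ij}=\dot\alpha_{ij}$). *)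

theory Defs
  imports "HOL-Analysis.Analysis" "HOL-Library.Sublist"
begin

text \<open>Stratified event tree for variables X_1,...,X_n (0-indexed here: variable X_(i+1)
  has state space {0..<r i}). A node v(x_1,...,x_k) is the list [x_1,...,x_k]; the root
  is the empty list. The k-th edge of a situation xs is the edge xs -> xs @ [k].\<close>

definition nodes :: "(nat \<Rightarrow> nat) \<Rightarrow> nat \<Rightarrow> nat list set" where
  "nodes r n = {xs. length xs \<le> n \<and> (\<forall>j<length xs. xs ! j < r j)}"

definition situations :: "(nat \<Rightarrow> nat) \<Rightarrow> nat \<Rightarrow> nat list set" where
  "situations r n = {xs \<in> nodes r n. \<exists>k. xs @ [k] \<in> nodes r n}"

definition leaves :: "(nat \<Rightarrow> nat) \<Rightarrow> nat \<Rightarrow> nat list set" where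
  "leaves r n = nodes r n - situations r n"

text \<open>Root-to-leaf paths are identified with their leaves; the paths through the edge
  entering node ys are the leaves having ys as a prefix.\<close>

definition npaths_through :: "(nat \<Rightarrow> nat) \<Rightarrow> nat \<Rightarrow> nat list \<Rightarrow> nat" where
  "npaths_through r n ys = card {l \<in> leaves r n. prefix ys l}"

text \<open>Staging: a labelling st of situations; stages are the classes of equal label.\<close>

definition stage_of :: "(nat \<Rightarrow> nat) \<Rightarrow> nat \<Rightarrow> (nat list \<Rightarrow> 's) \<Rightarrow> nat list \<Rightarrow> nat list set" where
  "stage_of r n st xs = {s \<in> situations r n. st s = st xs}"

definition stages :: "(nat \<Rightarrow> nat) \<Rightarrow> nat \<Rightarrow> (nat list \<Rightarrow> 's) \<Rightarrow> nat list set set" where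
  "stages r n st = stage_of r n st ` situations r n"

definition stage_labels :: "(nat \<Rightarrow> nat) \<Rightarrow> nat \<Rightarrow> nat list set \<Rightarrow> nat set" where
  "stage_labels r n U = {k. \<exists>s\<in>U. s @ [k] \<in> nodes r n}"

definition single_level_stages :: "(nat \<Rightarrow> nat) \<Rightarrow> nat \<Rightarrow> (nat list \<Rightarrow> 's) \<Rightarrow> bool" where
  "single_level_stages r n st =
     (\<forall>s\<in>situations r n. \<forall>t\<in>situations r n. st s = st t \<longrightarrow> length s = length t)"

definition bdepu_hyp :: "real \<Rightarrow> (nat \<Rightarrow> nat) \<Rightarrow> nat \<Rightarrow> nat list set \<Rightarrow> nat \<Rightarrow> real" where
  "bdepu_hyp \<alpha> r n U k =
     \<alpha> / real (card (leaves r n)) * (\<Sum>s\<in>U. real (npaths_through r n (s @ [k])))"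

text \<open>CS-BDeu: forward propagation. cs_lvl ... i ys is the individual hyperparameter of
  the edge entering node ys (of length i); for the root (i = 0) it is alpha, so that the
  root stage gets total alpha.\<close>

fun cs_lvl :: "real \<Rightarrow> (nat \<Rightarrow> nat) \<Rightarrow> nat \<Rightarrow> (nat list \<Rightarrow> 's) \<Rightarrow> nat \<Rightarrow> nat list \<Rightarrow> real" where
  "cs_lvl \<alpha> r n st 0 ys = \<alpha>"
| "cs_lvl \<alpha> r n st (Suc i) ys =
     (let U = stage_of r n st (butlast ys)
      in (\<Sum>s\<in>U. cs_lvl \<alpha> r n st i s) / real (card (stage_labels r n U)) / real (card U))"

definition cs_in :: "real \<Rightarrow> (nat \<Rightarrow> nat) \<Rightarrow> nat \<Rightarrow> (nat list \<Rightarrow> 's) \<Rightarrow> nat list \<Rightarrow> real" where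
  "cs_in \<alpha> r n st ys = cs_lvl \<alpha> r n st (length ys) ys"

definition cs_dot :: "real \<Rightarrow> (nat \<Rightarrow> nat) \<Rightarrow> nat \<Rightarrow> (nat list \<Rightarrow> 's) \<Rightarrow> nat list set \<Rightarrow> real" where
  "cs_dot \<alpha> r n st U = (\<Sum>s\<in>U. cs_in \<alpha> r n st s)"

definition cs_hyp :: "real \<Rightarrow> (nat \<Rightarrow> nat) \<Rightarrow> nat \<Rightarrow> (nat list \<Rightarrow> 's) \<Rightarrow> nat list set \<Rightarrow> nat \<Rightarrow> real" where
  "cs_hyp \<alpha> r n st U k = cs_dot \<alpha> r n st U / real (card (stage_labels r n U))"

text \<open>Data: a complete sample is a list of units, each a full assignment (a leaf).
  n_jk = number of units passing through the k-th edge of some situation of stage U.\<close>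

definition stage_count :: "nat list list \<Rightarrow> nat list set \<Rightarrow> nat \<Rightarrow> nat" where
  "stage_count D U k = (\<Sum>s\<in>U. length (filter (prefix (s @ [k])) D))"

definition bd_metric ::
  "nat list set set \<Rightarrow> (nat list set \<Rightarrow> nat set) \<Rightarrow> (nat list set \<Rightarrow> nat \<Rightarrow> real)
     \<Rightarrow> (nat list set \<Rightarrow> nat \<Rightarrow> nat) \<Rightarrow> real" where
  "bd_metric Us labs a cnt =
     (\<Prod>U\<in>Us. Gamma (\<Sum>k\<in>labs U. a U k)
               / Gamma ((\<Sum>k\<in>labs U. a U k) + (\<Sum>k\<in>labs U. real (cnt U k)))
               * (\<Prod>k\<in>labs U. Gamma (a U k + real (cnt U k)) / Gamma (a U k)))"

definition bdepu_score :: "real \<Rightarrow> (nat \<Rightarrow> nat) \<Rightarrow> nat \<Rightarrow> (nat list \<Rightarrow> 's) \<Rightarrow> nat list list \<Rightarrow> real" where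
  "bdepu_score \<alpha> r n st D =
     bd_metric (stages r n st) (stage_labels r n) (bdepu_hyp \<alpha> r n) (stage_count D)"

definition cs_bdeu_score :: "real \<Rightarrow> (nat \<Rightarrow> nat) \<Rightarrow> nat \<Rightarrow> (nat list \<Rightarrow> 's) \<Rightarrow> nat list list \<Rightarrow> real" where
  "cs_bdeu_score \<alpha> r n st D =
     bd_metric (stages r n st) (stage_labels r n) (cs_hyp \<alpha> r n st) (stage_count D)"

end

theory Submission
  imports Defs
begin

lemma snoc_nodes: "xs @ [k] \<in> nodes r n \<longleftrightarrow> length xs < n \<and> (\<forall>j<length xs. xs!j < r j) \<and> k < r (length xs)"
proof
  assume a: "xs @ [k] \<in> nodes r n"
  then have l: "length xs < n" and b: "\<forall>j<Suc (length xs). (xs @ [k]) ! j < r j"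
    unfolding nodes_def by auto
  have "\<forall>j<length xs. xs!j < r j"
  proof (intro allI impI)
    fix j assume "j < length xs"
    then show "xs!j < r j" using b[rule_format, of j] by (simp add: nth_append)
  qed
  moreover have "k < r (length xs)" using b[rule_format, of "length xs"] by simp
  ultimately show "length xs < n \<and> (\<forall>j<length xs. xs!j < r j) \<and> k < r (length xs)" using l by simp
next
  assume a: "length xs < n \<and> (\<forall>j<length xs. xs!j < r j) \<and> k < r (length xs)"
  have "\<forall>j<Suc (length xs). (xs @ [k]) ! j < r j"
  proof (intro allI impI)
    fix j assume "j < Suc (length xs)"
    then consider "j < length xs" | "j = length xs" by linarith
    then show "(xs @ [k]) ! j < r j" using a by cases (simp_all add: nth_append)
  qed
  then show "xs @ [k] \<in> nodes r n" using a unfolding nodes_def by simp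
qed

lemma sit_char: assumes "\<forall>i<n. 0 < r i"
  shows "situations r n = {xs. length xs < n \<and> (\<forall>j<length xs. xs!j < r j)}"
proof -
  have "(\<exists>k. xs @ [k] \<in> nodes r n) \<longleftrightarrow> length xs < n \<and> (\<forall>j<length xs. xs!j < r j)" for xs
    using assms unfolding snoc_nodes by blast
  then show ?thesis unfolding situations_def nodes_def by auto
qed

lemma leaves_char: assumes "\<forall>i<n. 0 < r i"
  shows "leaves r n = {xs. length xs = n \<and> (\<forall>j<n. xs!j < r j)}"
  using assms unfolding leaves_def sit_char[OF assms] by (auto simp: nodes_def)

lemma finite_nodes: "finite (nodes r n)"
proof -
  have "nodes r n \<subseteq> {xs. set xs \<subseteq> {0..<(\<Sum>j<n. r j)} \<and> length xs \<le> n}"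
  proof (clarsimp simp: nodes_def)
    fix xs x assume a: "length xs \<le> n" "\<forall>j<length xs. xs ! j < r j" "x \<in> set xs"
    then obtain j where j: "j < length xs" "xs ! j = x" by (auto simp: in_set_conv_nth)
    have "r j \<le> (\<Sum>j<n. r j)" using j a(1) by (intro member_le_sum) auto
    then show "x < (\<Sum>j<n. r j)" using a(2) j by fastforce
  qed
  moreover have "finite {xs. set xs \<subseteq> {0..<(\<Sum>j<n. r j)} \<and> length xs \<le> n}"
    by (rule finite_lists_length_le) auto
  ultimately show ?thesis by (rule finite_subset)
qed

lemma finite_situations: "finite (situations r n)"
  using finite_nodes unfolding situations_def by auto

lemma finite_tuples: fixes f :: "nat \<Rightarrow> nat" shows "finite {zs. length zs = m \<and> (\<forall>j<m. zs!j < f j)}"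
proof -
  have "{zs. length zs = m \<and> (\<forall>j<m. zs!j < f j)} \<subseteq> {xs. set xs \<subseteq> {0..<(\<Sum>j<m. f j)} \<and> length xs = m}"
  proof (rule subsetI, rule CollectI, rule conjI)
    fix xs assume "xs \<in> {zs. length zs = m \<and> (\<forall>j<m. zs!j < f j)}"
    then have a: "length xs = m" "\<forall>j<m. xs ! j < f j" by auto
    then show "length xs = m" by simp
    show "set xs \<subseteq> {0..<(\<Sum>j<m. f j)}"
    proof
      fix x assume "x \<in> set xs"
      then obtain j where j: "j < length xs" "xs ! j = x" by (auto simp: in_set_conv_nth)
      have "f j \<le> (\<Sum>j<m. f j)" using j a(1) by (intro member_le_sum) auto
      then show "x \<in> {0..<(\<Sum>j<m. f j)}" using a(1,2) j by fastforce
    qed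
  qed
  moreover have "finite {xs. set xs \<subseteq> {0..<(\<Sum>j<m. f j)} \<and> length xs = m}"
    by (rule finite_lists_length_eq) auto
  ultimately show ?thesis by (rule finite_subset)
qed

lemma card_tuples: fixes f :: "nat \<Rightarrow> nat" shows "card {zs. length zs = m \<and> (\<forall>j<m. zs!j < f j)} = (\<Prod>j<m. f j)"
proof (induction m)
  case 0
  then show ?case by simp
next
  case (Suc m)
  let ?A = "\<lambda>m. {zs. length zs = m \<and> (\<forall>j<m. zs!j < f j)}"
  have "?A (Suc m) = (\<lambda>(zs,z). zs @ [z]) ` (?A m \<times> {0..<f m})"
  proof (rule set_eqI, rule iffI)
    fix x assume "x \<in> ?A (Suc m)"
    then have x: "length x = Suc m" "\<forall>j<Suc m. x!j < f j" by auto
    then obtain zs z where e: "x = zs @ [z]" using length_Suc_conv_rev[of x m] by blast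
    have lz: "length zs = m" using x(1) e by simp
    have "\<forall>j<m. zs!j < f j"
    proof (intro allI impI)
      fix j assume "j < m"
      then show "zs!j < f j" using x(2)[rule_format, of j] e lz by (simp add: nth_append)
    qed
    then have "zs \<in> ?A m" using lz by simp
    moreover have "z \<in> {0..<f m}" using x(2)[rule_format, of m] e lz by (simp add: nth_append)
    ultimately show "x \<in> (\<lambda>(zs,z). zs @ [z]) ` (?A m \<times> {0..<f m})" using e by force
  next
    fix x assume "x \<in> (\<lambda>(zs,z). zs @ [z]) ` (?A m \<times> {0..<f m})"
    then show "x \<in> ?A (Suc m)" by (auto simp: nth_append less_Suc_eq)
  qed
  moreover have "inj_on (\<lambda>(zs,z). zs @ [z]) (?A m \<times> {0..<f m})"
    by (auto simp: inj_on_def)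
  ultimately have "card (?A (Suc m)) = card (?A m) * f m"
    by (simp add: card_image card_cartesian_product)
  then show ?case using Suc.IH by simp
qed

lemma prod_split: "(\<Prod>t<m+p. f t) = (\<Prod>t<m. f t) * (\<Prod>j<p. f (m+j::nat))"
  by (induction p) (auto simp: mult.assoc)

lemma leaves_prefix: assumes "\<forall>i<n. 0 < r i" "ys \<in> nodes r n"
  shows "{l \<in> leaves r n. prefix ys l} = (\<lambda>zs. ys @ zs) ` {zs. length zs = n - length ys \<and> (\<forall>j<n - length ys. zs!j < r (length ys + j))}"
proof (rule set_eqI, rule iffI)
  fix l assume "l \<in> {l \<in> leaves r n. prefix ys l}"
  then obtain zs where l: "l = ys @ zs" "length l = n" "\<forall>j<n. l!j < r j"
    unfolding leaves_char[OF assms(1)] prefix_def by auto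
  have "\<forall>j<n - length ys. zs!j < r (length ys + j)"
  proof (intro allI impI)
    fix j assume "j < n - length ys"
    then have "l ! (length ys + j) < r (length ys + j)" using l(3) by auto
    then show "zs!j < r (length ys + j)" using l(1) by (simp add: nth_append)
  qed
  then show "l \<in> (\<lambda>zs. ys @ zs) ` {zs. length zs = n - length ys \<and> (\<forall>j<n - length ys. zs!j < r (length ys + j))}"
    using l by auto
next
  fix l assume "l \<in> (\<lambda>zs. ys @ zs) ` {zs. length zs = n - length ys \<and> (\<forall>j<n - length ys. zs!j < r (length ys + j))}"
  then obtain zs where l: "l = ys @ zs" "length zs = n - length ys" "\<forall>j<n - length ys. zs!j < r (length ys + j)"
    by auto
  have ys: "length ys \<le> n" "\<forall>j<length ys. ys!j < r j" using assms(2) unfolding nodes_def by auto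
  have "\<forall>j<n. l!j < r j"
  proof (intro allI impI)
    fix j assume j: "j < n"
    show "l!j < r j"
    proof (cases "j < length ys")
      case True then show ?thesis using ys l(1) by (simp add: nth_append)
    next
      case False
      then have "j - length ys < n - length ys" using j by auto
      then have "zs ! (j - length ys) < r (length ys + (j - length ys))" using l(3) by blast
      then show ?thesis using l(1) False by (simp add: nth_append)
    qed
  qed
  then show "l \<in> {l \<in> leaves r n. prefix ys l}"
    unfolding leaves_char[OF assms(1)] using l ys by auto
qed

lemma npaths: assumes "\<forall>i<n. 0 < r i" "ys \<in> nodes r n"
  shows "npaths_through r n ys = (\<Prod>j<n - length ys. r (length ys + j))"
  unfolding npaths_through_def leaves_prefix[OF assms]
  by (subst card_image) (auto simp: inj_on_def card_tuples)

lemma card_leaves: assumes "\<forall>i<n. 0 < r i"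
  shows "card (leaves r n) = (\<Prod>j<n. r j)"
  using npaths[OF assms, of "[]"] unfolding npaths_through_def by (simp add: nodes_def)

lemma stage_facts:
  assumes rp: "\<forall>i<n. 0 < r i" and sl: "single_level_stages r n st" and xs: "xs \<in> situations r n"
  shows "xs \<in> stage_of r n st xs" "stage_of r n st xs \<subseteq> situations r n"
    "finite (stage_of r n st xs)" "card (stage_of r n st xs) > 0"
    "\<forall>s\<in>stage_of r n st xs. length s = length xs"
    "stage_labels r n (stage_of r n st xs) = {0..<r (length xs)}"
proof -
  show 1: "xs \<in> stage_of r n st xs" using xs unfolding stage_of_def by auto
  show 2: "stage_of r n st xs \<subseteq> situations r n" unfolding stage_of_def by auto
  show 3: "finite (stage_of r n st xs)" by (rule finite_subset[OF 2 finite_situations])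
  show "card (stage_of r n st xs) > 0" using 1 3 by (auto simp: card_gt_0_iff)
  show 5: "\<forall>s\<in>stage_of r n st xs. length s = length xs"
  proof
    fix s assume "s \<in> stage_of r n st xs"
    then have "s \<in> situations r n" "st s = st xs" unfolding stage_of_def by auto
    then show "length s = length xs" using sl xs unfolding single_level_stages_def by blast
  qed
  show "stage_labels r n (stage_of r n st xs) = {0..<r (length xs)}"
  proof (rule set_eqI, rule iffI)
    fix k assume "k \<in> stage_labels r n (stage_of r n st xs)"
    then obtain s where "s \<in> stage_of r n st xs" "s @ [k] \<in> nodes r n"
      unfolding stage_labels_def by auto
    moreover then have "length s = length xs" using 5 by blast
    ultimately show "k \<in> {0..<r (length xs)}" unfolding snoc_nodes by simp
  next
    fix k assume k: "k \<in> {0..<r (length xs)}"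
    have "xs @ [k] \<in> nodes r n" using xs k unfolding sit_char[OF rp] snoc_nodes by auto
    then show "k \<in> stage_labels r n (stage_of r n st xs)" using 1 unfolding stage_labels_def by auto
  qed
qed

lemma cs_lvl_val:
  assumes rp: "\<forall>i<n. 0 < r i" and sl: "single_level_stages r n st"
  shows "\<forall>ys. ys \<in> nodes r n \<and> length ys = i \<longrightarrow> cs_lvl \<alpha> r n st i ys = \<alpha> / real (\<Prod>t<i. r t)"
proof (induction i)
  case 0
  then show ?case by simp
next
  case (Suc i)
  show ?case
  proof (intro allI impI)
    fix ys assume ys: "ys \<in> nodes r n \<and> length ys = Suc i"
    define xs where "xs = butlast ys"
    have ysd: "ys = xs @ [last ys]" using ys unfolding xs_def
      by (metis append_butlast_last_id length_greater_0_conv zero_less_Suc)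
    have lx: "length xs = i" using ys unfolding xs_def by simp
    have xsit: "xs \<in> situations r n"
    proof -
      have "xs @ [last ys] \<in> nodes r n" using ys ysd by simp
      then show ?thesis unfolding snoc_nodes sit_char[OF rp] by simp
    qed
    let ?U = "stage_of r n st xs"
    note F = stage_facts[OF rp sl xsit]
    have "\<forall>s\<in>?U. cs_lvl \<alpha> r n st i s = \<alpha> / real (\<Prod>t<i. r t)"
      using Suc.IH F(2,5) lx unfolding situations_def by auto
    then have "(\<Sum>s\<in>?U. cs_lvl \<alpha> r n st i s) = real (card ?U) * (\<alpha> / real (\<Prod>t<i. r t))"
      by simp
    moreover have "r i > 0" using xsit lx unfolding sit_char[OF rp] using rp by auto
    moreover have "cs_lvl \<alpha> r n st (Suc i) ys = (\<Sum>s\<in>?U. cs_lvl \<alpha> r n st i s) / real (card (stage_labels r n ?U)) / real (card ?U)"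
      by (simp add: xs_def Let_def)
    ultimately show "cs_lvl \<alpha> r n st (Suc i) ys = \<alpha> / real (\<Prod>t<Suc i. r t)"
      using F(4,6) lx by (simp add: field_simps)
  qed
qed

theorem mainTheorem5:
  fixes \<alpha> :: real and r :: "nat \<Rightarrow> nat" and n :: nat and st :: "nat list \<Rightarrow> 's"
  assumes r_pos: "\<forall>i<n. 0 < r i"
    and single_level: "single_level_stages r n st"
    and alpha_pos: "0 < \<alpha>"
  shows "(\<forall>xs\<in>situations r n. \<forall>k<r (length xs).
            cs_hyp \<alpha> r n st (stage_of r n st xs) k = bdepu_hyp \<alpha> r n (stage_of r n st xs) k
          \<and> cs_hyp \<alpha> r n st (stage_of r n st xs) k
              = \<alpha> * real (card (stage_of r n st xs)) / real (\<Prod>t\<le>length xs. r t))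
       \<and> (\<forall>xs\<in>situations r n.
            cs_dot \<alpha> r n st (stage_of r n st xs)
              = \<alpha> * real (card (stage_of r n st xs)) / real (\<Prod>t<length xs. r t)
          \<and> (\<Sum>k\<in>stage_labels r n (stage_of r n st xs). bdepu_hyp \<alpha> r n (stage_of r n st xs) k)
              = \<alpha> * real (card (stage_of r n st xs)) / real (\<Prod>t<length xs. r t))
       \<and> (\<forall>D. set D \<subseteq> leaves r n \<longrightarrow> cs_bdeu_score \<alpha> r n st D = bdepu_score \<alpha> r n st D)"
proof -
  have key: "cs_dot \<alpha> r n st (stage_of r n st xs)
              = \<alpha> * real (card (stage_of r n st xs)) / real (\<Prod>t<length xs. r t)
        \<and> (\<forall>k<r (length xs). cs_hyp \<alpha> r n st (stage_of r n st xs) k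
              = \<alpha> * real (card (stage_of r n st xs)) / real (\<Prod>t\<le>length xs. r t)
           \<and> bdepu_hyp \<alpha> r n (stage_of r n st xs) k
              = \<alpha> * real (card (stage_of r n st xs)) / real (\<Prod>t\<le>length xs. r t))"
    if xs: "xs \<in> situations r n" for xs
  proof -
    let ?U = "stage_of r n st xs"
    let ?L = "length xs"
    let ?h = "real (card ?U)"
    note F = stage_facts[OF r_pos single_level xs]
    have Ln: "?L < n" using xs unfolding sit_char[OF r_pos] by auto
    have rL: "r ?L > 0" using Ln r_pos by auto
    have Ppos: "(\<Prod>t<m. r t) > 0" if "m \<le> n" for m
      using r_pos that by (intro prod_pos) auto
    have Pat: "(\<Prod>t\<le>?L. r t) = (\<Prod>t<?L. r t) * r ?L"
      by (simp add: lessThan_Suc_atMost[symmetric])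
    have dot: "cs_dot \<alpha> r n st ?U = \<alpha> * ?h / real (\<Prod>t<?L. r t)"
    proof -
      have "\<forall>s\<in>?U. cs_in \<alpha> r n st s = \<alpha> / real (\<Prod>t<?L. r t)"
        using cs_lvl_val[OF r_pos single_level, of ?L \<alpha>] F(2,5)
        unfolding cs_in_def situations_def by auto
      then show ?thesis unfolding cs_dot_def by simp
    qed
    have hyp: "cs_hyp \<alpha> r n st ?U k = \<alpha> * ?h / real (\<Prod>t\<le>?L. r t)" for k
      unfolding cs_hyp_def dot F(6) Pat using rL by (simp add: field_simps)
    have bd: "bdepu_hyp \<alpha> r n ?U k = \<alpha> * ?h / real (\<Prod>t\<le>?L. r t)" if k: "k < r ?L" for k
    proof -
      define B where "B = (\<Prod>j<n - Suc ?L. r (Suc ?L + j))"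
      have "\<forall>s\<in>?U. npaths_through r n (s @ [k]) = B"
      proof
        fix s assume s: "s \<in> ?U"
        have ls: "length s = ?L" using F(5) s by auto
        have "s \<in> situations r n" using F(2) s by auto
        then have "s @ [k] \<in> nodes r n" using k ls unfolding sit_char[OF r_pos] snoc_nodes by auto
        then show "npaths_through r n (s @ [k]) = B"
          using npaths[OF r_pos] ls unfolding B_def by simp
      qed
      then have sumB: "(\<Sum>s\<in>?U. real (npaths_through r n (s @ [k]))) = ?h * real B" by simp
      have spl: "(\<Prod>j<n. r j) = (\<Prod>t<Suc ?L. r t) * B"
        using prod_split[of r "Suc ?L" "n - Suc ?L"] Ln unfolding B_def by simp
      have Bpos: "B > 0" unfolding B_def using r_pos by (intro prod_pos) auto
      have "bdepu_hyp \<alpha> r n ?U k = \<alpha> / (real (\<Prod>t<Suc ?L. r t) * real B) * (?h * real B)"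
        unfolding bdepu_hyp_def sumB card_leaves[OF r_pos] spl by simp
      also have "\<dots> = \<alpha> * ?h / real (\<Prod>t<Suc ?L. r t)" using Bpos by (simp add: field_simps)
      finally show ?thesis by (simp add: lessThan_Suc_atMost)
    qed
    show ?thesis using dot hyp bd by auto
  qed
  have part1: "\<forall>xs\<in>situations r n. \<forall>k<r (length xs).
            cs_hyp \<alpha> r n st (stage_of r n st xs) k = bdepu_hyp \<alpha> r n (stage_of r n st xs) k
          \<and> cs_hyp \<alpha> r n st (stage_of r n st xs) k
              = \<alpha> * real (card (stage_of r n st xs)) / real (\<Prod>t\<le>length xs. r t)"
    using key by auto
  have part2: "\<forall>xs\<in>situations r n.
            cs_dot \<alpha> r n st (stage_of r n st xs)
              = \<alpha> * real (card (stage_of r n st xs)) / real (\<Prod>t<length xs. r t)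
          \<and> (\<Sum>k\<in>stage_labels r n (stage_of r n st xs). bdepu_hyp \<alpha> r n (stage_of r n st xs) k)
              = \<alpha> * real (card (stage_of r n st xs)) / real (\<Prod>t<length xs. r t)"
  proof
    fix xs assume xs: "xs \<in> situations r n"
    let ?L = "length xs"
    note F = stage_facts[OF r_pos single_level xs]
    have Ln: "?L < n" using xs unfolding sit_char[OF r_pos] by auto
    have rL: "r ?L > 0" using Ln r_pos by auto
    have Pat: "(\<Prod>t\<le>?L. r t) = (\<Prod>t<?L. r t) * r ?L"
      by (simp add: lessThan_Suc_atMost[symmetric])
    have "(\<Sum>k\<in>stage_labels r n (stage_of r n st xs). bdepu_hyp \<alpha> r n (stage_of r n st xs) k)
        = (\<Sum>k\<in>{0..<r ?L}. \<alpha> * real (card (stage_of r n st xs)) / real (\<Prod>t\<le>?L. r t))"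
      unfolding F(6) using key[OF xs] by (intro sum.cong) auto
    also have "\<dots> = \<alpha> * real (card (stage_of r n st xs)) / real (\<Prod>t<?L. r t)"
      unfolding Pat using rL by (simp add: field_simps)
    finally show "cs_dot \<alpha> r n st (stage_of r n st xs)
              = \<alpha> * real (card (stage_of r n st xs)) / real (\<Prod>t<length xs. r t)
          \<and> (\<Sum>k\<in>stage_labels r n (stage_of r n st xs). bdepu_hyp \<alpha> r n (stage_of r n st xs) k)
              = \<alpha> * real (card (stage_of r n st xs)) / real (\<Prod>t<length xs. r t)"
      using key[OF xs] by simp
  qed
  have part3: "cs_bdeu_score \<alpha> r n st D = bdepu_score \<alpha> r n st D" for D
    unfolding cs_bdeu_score_def bdepu_score_def bd_metric_def
  proof (rule prod.cong[OF refl])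
    fix U assume "U \<in> stages r n st"
    then obtain xs where xs: "xs \<in> situations r n" and U: "U = stage_of r n st xs"
      unfolding stages_def by auto
    have eq: "\<And>k. k \<in> stage_labels r n U \<Longrightarrow> cs_hyp \<alpha> r n st U k = bdepu_hyp \<alpha> r n U k"
      using key[OF xs] stage_facts(6)[OF r_pos single_level xs] U by auto
    show "Gamma (\<Sum>k\<in>stage_labels r n U. cs_hyp \<alpha> r n st U k) /
         Gamma ((\<Sum>k\<in>stage_labels r n U. cs_hyp \<alpha> r n st U k) + (\<Sum>k\<in>stage_labels r n U. real (stage_count D U k))) *
         (\<Prod>k\<in>stage_labels r n U. Gamma (cs_hyp \<alpha> r n st U k + real (stage_count D U k)) / Gamma (cs_hyp \<alpha> r n st U k)) =
         Gamma (\<Sum>k\<in>stage_labels r n U. bdepu_hyp \<alpha> r n U k) /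
         Gamma ((\<Sum>k\<in>stage_labels r n U. bdepu_hyp \<alpha> r n U k) + (\<Sum>k\<in>stage_labels r n U. real (stage_count D U k))) *
         (\<Prod>k\<in>stage_labels r n U. Gamma (bdepu_hyp \<alpha> r n U k + real (stage_count D U k)) / Gamma (bdepu_hyp \<alpha> r n U k))"
      using eq by (simp cong: sum.cong prod.cong)
  qed
  show ?thesis using part1 part2 part3 by blast
qed

end
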